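(* There exist positive constants $c_1,c_2$ and constants $\delta_0=1/8$, $\alpha_0=e^{-8}/4$ such that for every $\delta\in(0,\delta_0)$, every $\alpha\in(0,\alpha_0)$, and every (randomized) algorithm that solves $(\delta,\alpha)$-BAIF, there exists a problem instance on which the expected number of arm pulls $T$ of the algorithm satisfies $\mathbb{E}[T]\ge c_1\frac{1}{\delta^2}\log\frac{c_2}{\alpha}$. In particular, the sample complexity of any algorithm solving $(\delta,\alpha)$-BAIF is $\Omega(\frac{1}{\delta^2}\log\frac1\alpha)$.
   Context: Best arm identification with failure, $(\delta,\alpha)$-BAIF: there are two arms $a_0,a_1$ with binary rewards in $\{0,1\}$; each pull of an arm gives an independent Bernoulli reward, and one arm has mean $\frac12+\frac\delta2$ (the optimal arm) while the other has mean $\frac12-\frac\delta2$, where $\delta\in(0,1)$. An algorithm adaptively pulls arms and then either returns FAIL or returns an arm. It solves $(\delta,\alpha)$-BAIF if on every such instance it returns FAIL with probability at most $\frac18$, and, conditioned on not returning FAIL, it returns the optimal arm with probability at least $1-\alpha$. *)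

theory Defs
  imports "HOL-Probability.Probability"
begin

text \<open>Two arms, encoded as bool (a0 = False, a1 = True). Rewards are bool (True = 1).
  At each step a (randomized, adaptive) algorithm chooses, as a function of the history,
  a probability distribution over actions: pull an arm, or stop with an output
  (None = FAIL, Some a = return arm a).\<close>

datatype action = Pull bool | Stop "bool option"

type_synonym history = "(bool \<times> bool) list"
type_synonym policy = "history \<Rightarrow> action pmf"

text \<open>State after n decision steps: (history, None) if still running,
  (history, Some out) if stopped with output out.\<close>
fun run :: "policy \<Rightarrow> (bool \<Rightarrow> real) \<Rightarrow> nat \<Rightarrow> (history \<times> bool option option) pmf" where
  "run A mu 0 = return_pmf ([], None)"
| "run A mu (Suc n) = bind_pmf (run A mu n) (\<lambda>(h, s).
     case s of
       Some out \<Rightarrow> return_pmf (h, Some out)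
     | None \<Rightarrow> bind_pmf (A h) (\<lambda>act. case act of
           Stop out \<Rightarrow> return_pmf (h, Some out)
         | Pull a \<Rightarrow> map_pmf (\<lambda>r. (h @ [(a, r)], None)) (bernoulli_pmf (mu a))))"

definition out_prob :: "policy \<Rightarrow> (bool \<Rightarrow> real) \<Rightarrow> bool option \<Rightarrow> real" where
  "out_prob A mu out = (SUP n. measure_pmf.prob (run A mu n) {x. snd x = Some out})"

text \<open>Expected number of arm pulls: E[T] = sum_n P(T > n); T > n iff the process is
  still running after n+1 decision steps.\<close>
definition expected_pulls :: "policy \<Rightarrow> (bool \<Rightarrow> real) \<Rightarrow> ennreal" where
  "expected_pulls A mu = (\<Sum>n. ennreal (measure_pmf.prob (run A mu (Suc n)) {x. snd x = None}))"

definition inst :: "real \<Rightarrow> bool \<Rightarrow> bool \<Rightarrow> real" where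
  "inst \<delta> opt = (\<lambda>a. if a = opt then 1/2 + \<delta>/2 else 1/2 - \<delta>/2)"

text \<open>(delta,alpha)-BAIF: on every instance, P(FAIL) \<le> 1/8 and
  P(return optimal) \<ge> (1 - alpha) * P(not FAIL), i.e. conditioned on not failing
  the optimal arm is returned w.p. \<ge> 1 - alpha.\<close>
definition solves_BAIF :: "policy \<Rightarrow> real \<Rightarrow> real \<Rightarrow> bool" where
  "solves_BAIF A \<delta> \<alpha> \<longleftrightarrow> (\<forall>opt.
     out_prob A (inst \<delta> opt) None \<le> 1/8 \<and>
     out_prob A (inst \<delta> opt) (Some opt) \<ge>
       (1 - \<alpha>) * (out_prob A (inst \<delta> opt) (Some opt) + out_prob A (inst \<delta> opt) (Some (\<not> opt))))"

end

theory Submission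
  imports Defs
begin

lemma bind_ratio:
  assumes h1: "\<And>y. pmf M1 y = wa y * pmf M0 y"
    and h2: "\<And>y. wa y * pmf (K1 y) x = wb x * pmf (K0 y) x"
    and h3: "\<And>y. wa y \<ge> 0" and h4: "wb x \<ge> 0"
  shows "pmf (bind_pmf M1 K1) x = wb x * pmf (bind_pmf M0 K0) x"
proof -
  have "ennreal (pmf (bind_pmf M1 K1) x) = (\<integral>\<^sup>+y. ennreal (pmf (K1 y) x) \<partial>measure_pmf M1)"
    by (rule ennreal_pmf_bind)
  also have "\<dots> = (\<integral>\<^sup>+y. ennreal (pmf M1 y) * ennreal (pmf (K1 y) x) \<partial>count_space UNIV)"
    by (rule nn_integral_measure_pmf)
  also have "\<dots> = (\<integral>\<^sup>+y. ennreal (wb x) * (ennreal (pmf M0 y) * ennreal (pmf (K0 y) x)) \<partial>count_space UNIV)"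
  proof (rule nn_integral_cong)
    fix y
    have "pmf M1 y * pmf (K1 y) x = wb x * (pmf M0 y * pmf (K0 y) x)"
      using h1[of y] h2[of y] by (simp add: algebra_simps)
    thus "ennreal (pmf M1 y) * ennreal (pmf (K1 y) x) = ennreal (wb x) * (ennreal (pmf M0 y) * ennreal (pmf (K0 y) x))"
      using h4 by (simp add: ennreal_mult[symmetric])
  qed
  also have "\<dots> = ennreal (wb x) * (\<integral>\<^sup>+y. ennreal (pmf M0 y) * ennreal (pmf (K0 y) x) \<partial>count_space UNIV)"
    by (rule nn_integral_cmult) simp
  also have "\<dots> = ennreal (wb x) * ennreal (pmf (bind_pmf M0 K0) x)"
    by (simp add: ennreal_pmf_bind nn_integral_measure_pmf)
  also have "\<dots> = ennreal (wb x * pmf (bind_pmf M0 K0) x)"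
    using h4 by (simp add: ennreal_mult)
  finally show ?thesis using h4 by (simp add: ennreal_inj)
qed

definition valid :: "(bool \<Rightarrow> real) \<Rightarrow> bool" where
  "valid mu \<longleftrightarrow> (\<forall>a. 0 < mu a \<and> mu a < 1)"
definition rt :: "(bool \<Rightarrow> real) \<Rightarrow> (bool \<Rightarrow> real) \<Rightarrow> bool \<Rightarrow> bool \<Rightarrow> real" where
  "rt mu1 mu0 a r = pmf (bernoulli_pmf (mu1 a)) r / pmf (bernoulli_pmf (mu0 a)) r"
definition rho :: "(bool \<Rightarrow> real) \<Rightarrow> (bool \<Rightarrow> real) \<Rightarrow> history \<Rightarrow> real" where
  "rho mu1 mu0 h = prod_list (map (\<lambda>(a,r). rt mu1 mu0 a r) h)"

definition step :: "policy \<Rightarrow> (bool \<Rightarrow> real) \<Rightarrow> history \<times> bool option option \<Rightarrow> (history \<times> bool option option) pmf" where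
  "step A mu = (\<lambda>(h, s).
     case s of
       Some out \<Rightarrow> return_pmf (h, Some out)
     | None \<Rightarrow> bind_pmf (A h) (\<lambda>act. case act of
           Stop out \<Rightarrow> return_pmf (h, Some out)
         | Pull a \<Rightarrow> map_pmf (\<lambda>r. (h @ [(a, r)], None)) (bernoulli_pmf (mu a))))"

lemma run_Suc': "run A mu (Suc n) = bind_pmf (run A mu n) (step A mu)"
  by (simp add: step_def)

lemma bern_pos: "valid mu \<Longrightarrow> pmf (bernoulli_pmf (mu a)) r > 0"
  unfolding valid_def by (cases r) (auto simp: less_imp_le)

lemma rt_pos: "valid mu1 \<Longrightarrow> valid mu0 \<Longrightarrow> rt mu1 mu0 a r > 0"
  unfolding rt_def using bern_pos by (simp add: divide_pos_pos)

lemma rho_pos: "valid mu1 \<Longrightarrow> valid mu0 \<Longrightarrow> rho mu1 mu0 h > 0"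
  unfolding rho_def by (induction h) (auto intro!: mult_pos_pos rt_pos)

lemma rho_snoc: "rho mu1 mu0 (h @ [(a,r)]) = rho mu1 mu0 h * rt mu1 mu0 a r"
  unfolding rho_def by simp

lemma step_ratio:
  assumes v1: "valid mu1" and v0: "valid mu0"
  shows "rho mu1 mu0 (fst y) * pmf (step A mu1 y) x = rho mu1 mu0 (fst x) * pmf (step A mu0 y) x"
proof -
  obtain h s where y: "y = (h, s)" by fastforce
  show ?thesis
  proof (cases s)
    case (Some out)
    then show ?thesis using y by (cases "x = (h, Some out)") (auto simp: step_def)
  next
    case None
    have hp: "rho mu1 mu0 h > 0" using rho_pos[OF v1 v0] .
    have "pmf (bind_pmf (A h) (\<lambda>act. case act of
           Stop out \<Rightarrow> return_pmf (h, Some out)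
         | Pull a \<Rightarrow> map_pmf (\<lambda>r. (h @ [(a, r)], None)) (bernoulli_pmf (mu1 a)))) x
      = rho mu1 mu0 (fst x) / rho mu1 mu0 h * pmf (bind_pmf (A h) (\<lambda>act. case act of
           Stop out \<Rightarrow> return_pmf (h, Some out)
         | Pull a \<Rightarrow> map_pmf (\<lambda>r. (h @ [(a, r)], None)) (bernoulli_pmf (mu0 a)))) x"
    proof (rule bind_ratio[where wa = "\<lambda>_. 1"])
      fix act
      show "1 * pmf (case act of
           Stop out \<Rightarrow> return_pmf (h, Some out)
         | Pull a \<Rightarrow> map_pmf (\<lambda>r. (h @ [(a, r)], None)) (bernoulli_pmf (mu1 a))) x
        = rho mu1 mu0 (fst x) / rho mu1 mu0 h * pmf (case act of
           Stop out \<Rightarrow> return_pmf (h, Some out)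
         | Pull a \<Rightarrow> map_pmf (\<lambda>r. (h @ [(a, r)], None)) (bernoulli_pmf (mu0 a))) x"
      proof (cases act)
        case (Stop out)
        then show ?thesis using hp by (cases "x = (h, Some out)") auto
      next
        case (Pull a)
        show ?thesis
        proof (cases "\<exists>r. x = (h @ [(a, r)], None)")
          case True
          then obtain r where x: "x = (h @ [(a, r)], None)" by blast
          have inj: "inj (\<lambda>r. (h @ [(a, r)], None :: bool option option))" by (auto simp: inj_def)
          have b0: "pmf (bernoulli_pmf (mu0 a)) r > 0" using bern_pos[OF v0] .
          show ?thesis using Pull x hp b0
            by (simp add: pmf_map_inj'[OF inj] rho_snoc rt_def)
        next
          case False
          have "pmf (map_pmf (\<lambda>r. (h @ [(a, r)], None)) (bernoulli_pmf (mu' a))) x = 0" for mu'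
            using False by (intro pmf_map_outside) auto
          then show ?thesis using Pull by simp
        qed
      qed
    qed (auto simp: less_imp_le[OF rho_pos[OF v1 v0]])
    then show ?thesis using y None hp by (simp add: step_def)
  qed
qed

lemma run_ratio:
  assumes v1: "valid mu1" and v0: "valid mu0"
  shows "pmf (run A mu1 n) x = rho mu1 mu0 (fst x) * pmf (run A mu0 n) x"
proof (induction n arbitrary: x)
  case 0
  then show ?case by (cases "x = ([], None)") (auto simp: rho_def)
next
  case (Suc n)
  show ?case unfolding run_Suc'
    by (rule bind_ratio[where wa = "\<lambda>y. rho mu1 mu0 (fst y)"])
       (auto simp: Suc step_ratio[OF v1 v0] less_imp_le[OF rho_pos[OF v1 v0]])
qed

lemma bern_int:
  assumes v1: "valid mu1" and v0: "valid mu0"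
  shows "(\<integral>\<^sup>+r. ennreal (rho mu1 mu0 (h @ [(a, r)])) \<partial>measure_pmf (bernoulli_pmf (mu1 a)))
    = ennreal (rho mu1 mu0 h * (mu1 a * rt mu1 mu0 a True + (1 - mu1 a) * rt mu1 mu0 a False))"
proof -
  have m: "0 \<le> mu1 a" "mu1 a \<le> 1" using v1 unfolding valid_def by (auto simp: less_imp_le)
  have p: "rho mu1 mu0 h > 0" "rt mu1 mu0 a True > 0" "rt mu1 mu0 a False > 0"
    using rho_pos[OF v1 v0] rt_pos[OF v1 v0] by auto
  have "(\<integral>\<^sup>+r. ennreal (rho mu1 mu0 (h @ [(a, r)])) \<partial>measure_pmf (bernoulli_pmf (mu1 a)))
     = (\<Sum>r\<in>UNIV. ennreal (pmf (bernoulli_pmf (mu1 a)) r) * ennreal (rho mu1 mu0 (h @ [(a, r)])))"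
    by (simp add: nn_integral_measure_pmf nn_integral_count_space_finite)
  also have "\<dots> = ennreal (mu1 a) * ennreal (rho mu1 mu0 h * rt mu1 mu0 a True)
      + ennreal (1 - mu1 a) * ennreal (rho mu1 mu0 h * rt mu1 mu0 a False)"
    using m by (simp add: UNIV_bool rho_snoc add.commute)
  also have "\<dots> = ennreal (rho mu1 mu0 h * (mu1 a * rt mu1 mu0 a True + (1 - mu1 a) * rt mu1 mu0 a False))"
    using m p by (simp add: ennreal_mult[symmetric] ennreal_plus[symmetric] algebra_simps del: ennreal_plus)
  finally show ?thesis .
qed

lemma step_int:
  assumes v1: "valid mu1" and v0: "valid mu0" and g1: "1 \<le> g"
    and gb: "\<And>a. mu1 a * rt mu1 mu0 a True + (1 - mu1 a) * rt mu1 mu0 a False \<le> g"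
  shows "(\<integral>\<^sup>+z. ennreal (rho mu1 mu0 (fst z)) \<partial>measure_pmf (step A mu1 y))
     \<le> ennreal (g * rho mu1 mu0 (fst y))"
proof -
  obtain h s where y: "y = (h, s)" by fastforce
  have hp: "rho mu1 mu0 h > 0" using rho_pos[OF v1 v0] .
  have hg: "rho mu1 mu0 h \<le> g * rho mu1 mu0 h" using hp g1 by simp
  show ?thesis
  proof (cases s)
    case (Some out)
    then show ?thesis using y hg by (simp add: step_def ennreal_leI)
  next
    case None
    have "(\<integral>\<^sup>+z. ennreal (rho mu1 mu0 (fst z)) \<partial>measure_pmf (step A mu1 y))
      = (\<integral>\<^sup>+act. (\<integral>\<^sup>+z. ennreal (rho mu1 mu0 (fst z)) \<partial>measure_pmf (case act of
           Stop out \<Rightarrow> return_pmf (h, Some out)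
         | Pull a \<Rightarrow> map_pmf (\<lambda>r. (h @ [(a, r)], None)) (bernoulli_pmf (mu1 a)))) \<partial>measure_pmf (A h))"
      using y None by (simp add: step_def)
    also have "\<dots> \<le> (\<integral>\<^sup>+act. ennreal (g * rho mu1 mu0 h) \<partial>measure_pmf (A h))"
    proof (rule nn_integral_mono)
      fix act
      show "(\<integral>\<^sup>+z. ennreal (rho mu1 mu0 (fst z)) \<partial>measure_pmf (case act of
           Stop out \<Rightarrow> return_pmf (h, Some out)
         | Pull a \<Rightarrow> map_pmf (\<lambda>r. (h @ [(a, r)], None)) (bernoulli_pmf (mu1 a))))
          \<le> ennreal (g * rho mu1 mu0 h)"
      proof (cases act)
        case (Pull a)
        have "rho mu1 mu0 h * (mu1 a * rt mu1 mu0 a True + (1 - mu1 a) * rt mu1 mu0 a False)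
           \<le> g * rho mu1 mu0 h"
          using gb[of a] hp by (simp add: mult.commute)
        then show ?thesis using Pull bern_int[OF v1 v0, where h=h and a=a] by (simp add: ennreal_leI)
      qed (use hg in \<open>simp add: ennreal_leI\<close>)
    qed
    also have "\<dots> = ennreal (g * rho mu1 mu0 h)"
      by (simp add: measure_pmf.emeasure_space_1)
    finally show ?thesis using y by simp
  qed
qed

lemma run_int:
  assumes v1: "valid mu1" and v0: "valid mu0" and g1: "1 \<le> g"
    and gb: "\<And>a. mu1 a * rt mu1 mu0 a True + (1 - mu1 a) * rt mu1 mu0 a False \<le> g"
  shows "(\<integral>\<^sup>+z. ennreal (rho mu1 mu0 (fst z)) \<partial>measure_pmf (run A mu1 n)) \<le> ennreal (g ^ n)"
proof (induction n)
  case 0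
  then show ?case by (simp add: rho_def)
next
  case (Suc n)
  have "(\<integral>\<^sup>+z. ennreal (rho mu1 mu0 (fst z)) \<partial>measure_pmf (run A mu1 (Suc n)))
     = (\<integral>\<^sup>+y. (\<integral>\<^sup>+z. ennreal (rho mu1 mu0 (fst z)) \<partial>measure_pmf (step A mu1 y)) \<partial>measure_pmf (run A mu1 n))"
    by (simp only: run_Suc' nn_integral_bind_pmf)
  also have "\<dots> \<le> (\<integral>\<^sup>+y. ennreal g * ennreal (rho mu1 mu0 (fst y)) \<partial>measure_pmf (run A mu1 n))"
    by (rule nn_integral_mono) (use step_int[OF v1 v0 g1 gb] g1 less_imp_le[OF rho_pos[OF v1 v0]] in \<open>simp add: ennreal_mult\<close>)
  also have "\<dots> = ennreal g * (\<integral>\<^sup>+y. ennreal (rho mu1 mu0 (fst y)) \<partial>measure_pmf (run A mu1 n))"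
    by (rule nn_integral_cmult) simp
  also have "\<dots> \<le> ennreal g * ennreal (g ^ n)"
    using Suc by (intro mult_left_mono) auto
  also have "\<dots> = ennreal (g ^ Suc n)" using g1 by (simp add: ennreal_mult[symmetric])
  finally show ?case .
qed

lemma change_measure:
  assumes v1: "valid mu1" and v0: "valid mu0" and g1: "1 \<le> g"
    and gb: "\<And>a. mu1 a * rt mu1 mu0 a True + (1 - mu1 a) * rt mu1 mu0 a False \<le> g"
    and lp: "l > 0"
  shows "measure_pmf.prob (run A mu1 n) S \<le> l * measure_pmf.prob (run A mu0 n) S + g ^ n / (4 * l)"
proof -
  let ?M1 = "run A mu1 n" and ?M0 = "run A mu0 n" and ?r = "\<lambda>x. rho mu1 mu0 (fst x)"
  have pw: "ennreal (pmf ?M1 x) * indicator S x \<le>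
      ennreal l * (ennreal (pmf ?M0 x) * indicator S x) + ennreal (1 / (4 * l)) * (ennreal (pmf ?M1 x) * ennreal (?r x))" for x
  proof -
    have rp: "?r x > 0" using rho_pos[OF v1 v0] .
    have e: "pmf ?M1 x = ?r x * pmf ?M0 x" by (rule run_ratio[OF v1 v0])
    have p0: "pmf ?M0 x \<ge> 0" by simp
    have sq: "4 * l * ?r x \<le> 4 * l * l + ?r x * ?r x"
      using sum_squares_ge_zero[of "?r x - 2 * l" 0] by (simp add: power2_eq_square algebra_simps)
    have "?r x \<le> l + ?r x * ?r x / (4 * l)"
      using sq lp by (simp add: field_simps)
    hence "?r x * pmf ?M0 x \<le> (l + ?r x * ?r x / (4 * l)) * pmf ?M0 x"
      using p0 by (rule mult_right_mono)
    also have "\<dots> = l * pmf ?M0 x + 1 / (4 * l) * (?r x * pmf ?M0 x * ?r x)"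
      using lp by (simp add: field_simps)
    finally have key: "pmf ?M1 x \<le> l * pmf ?M0 x + 1 / (4 * l) * (pmf ?M1 x * ?r x)"
      unfolding e .
    show ?thesis
    proof (cases "x \<in> S")
      case True
      have "ennreal (pmf ?M1 x) \<le> ennreal (l * pmf ?M0 x + 1 / (4 * l) * (pmf ?M1 x * ?r x))"
        using key by (rule ennreal_leI)
      also have "\<dots> = ennreal l * ennreal (pmf ?M0 x) + ennreal (1 / (4 * l)) * (ennreal (pmf ?M1 x) * ennreal (?r x))"
      proof -
        have a: "0 \<le> l * pmf ?M0 x" "0 \<le> 1 / (4 * l) * (pmf ?M1 x * ?r x)"
          using lp rp by auto
        have b: "ennreal (l * pmf ?M0 x) = ennreal l * ennreal (pmf ?M0 x)"
          using lp by (intro ennreal_mult) auto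
        have c: "ennreal (1 / (4 * l) * (pmf ?M1 x * ?r x)) = ennreal (1 / (4 * l)) * ennreal (pmf ?M1 x * ?r x)"
          using lp rp by (intro ennreal_mult) auto
        have d: "ennreal (pmf ?M1 x * ?r x) = ennreal (pmf ?M1 x) * ennreal (?r x)"
          using lp rp by (intro ennreal_mult) auto
        show ?thesis by (simp only: ennreal_plus[OF a] b c d)
      qed
      finally show ?thesis using True by simp
    qed simp
  qed
  have "emeasure ?M1 S = (\<integral>\<^sup>+x. ennreal (pmf ?M1 x) * indicator S x \<partial>count_space UNIV)"
    by (simp add: nn_integral_measure_pmf[symmetric])
  also have "\<dots> \<le> (\<integral>\<^sup>+x. ennreal l * (ennreal (pmf ?M0 x) * indicator S x) + ennreal (1 / (4 * l)) * (ennreal (pmf ?M1 x) * ennreal (?r x)) \<partial>count_space UNIV)"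
    by (rule nn_integral_mono) (rule pw)
  also have "\<dots> = ennreal l * (\<integral>\<^sup>+x. ennreal (pmf ?M0 x) * indicator S x \<partial>count_space UNIV)
       + ennreal (1 / (4 * l)) * (\<integral>\<^sup>+x. ennreal (pmf ?M1 x) * ennreal (?r x) \<partial>count_space UNIV)"
    by (simp add: nn_integral_add nn_integral_cmult)
  also have "\<dots> = ennreal l * emeasure ?M0 S + ennreal (1 / (4 * l)) * (\<integral>\<^sup>+x. ennreal (?r x) \<partial>measure_pmf ?M1)"
    by (simp add: nn_integral_measure_pmf[symmetric])
  also have "\<dots> \<le> ennreal l * emeasure ?M0 S + ennreal (1 / (4 * l)) * ennreal (g ^ n)"
    using run_int[OF v1 v0 g1 gb, of A n] by (intro add_left_mono mult_left_mono) auto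
  also have "\<dots> = ennreal (l * measure_pmf.prob ?M0 S + g ^ n / (4 * l))"
    using lp g1 by (simp add: measure_pmf.emeasure_eq_measure ennreal_mult[symmetric] ennreal_plus[symmetric] del: ennreal_plus)
  finally have "ennreal (measure_pmf.prob ?M1 S) \<le> ennreal (l * measure_pmf.prob ?M0 S + g ^ n / (4 * l))"
    by (simp add: measure_pmf.emeasure_eq_measure)
  moreover have "0 \<le> l * measure_pmf.prob ?M0 S + g ^ n / (4 * l)"
    using lp g1 by (intro add_nonneg_nonneg mult_nonneg_nonneg divide_nonneg_nonneg) auto
  ultimately show ?thesis
    using ennreal_le_iff by blast
qed

lemma run_mono:
  "measure_pmf.prob (run A mu (Suc n)) {x. snd x = None} \<le> measure_pmf.prob (run A mu n) {x. snd x = None}"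
proof -
  let ?X = "{x :: history \<times> bool option option. snd x = None}"
  have "emeasure (run A mu (Suc n)) ?X = (\<integral>\<^sup>+y. emeasure (step A mu y) ?X \<partial>measure_pmf (run A mu n))"
    by (simp only: run_Suc' emeasure_bind_pmf)
  also have "\<dots> \<le> (\<integral>\<^sup>+y. indicator ?X y \<partial>measure_pmf (run A mu n))"
  proof (rule nn_integral_mono)
    fix y :: "history \<times> bool option option"
    obtain h s where y: "y = (h, s)" by fastforce
    show "emeasure (step A mu y) ?X \<le> indicator ?X y"
    proof (cases s)
      case None
      then show ?thesis using y by (simp add: measure_pmf.emeasure_le_1)
    next
      case (Some out)
      then show ?thesis using y by (simp add: step_def)
    qed
  qed
  also have "\<dots> = emeasure (run A mu n) ?X" by simp
  finally show ?thesis by (simp add: measure_pmf.emeasure_eq_measure)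
qed

lemma pulls_bound:
  "ennreal (real t * measure_pmf.prob (run A mu t) {x. snd x = None}) \<le> expected_pulls A mu"
proof -
  let ?R = "\<lambda>n. measure_pmf.prob (run A mu n) {x. snd x = None}"
  have anti: "?R m \<le> ?R n" if "n \<le> m" for n m
    using lift_Suc_antimono_le[of ?R, OF run_mono that] .
  have "ennreal (real t * ?R t) = (\<Sum>n<t. ennreal (?R t))"
    by (simp add: ennreal_mult' ennreal_of_nat_eq_real_of_nat)
  also have "\<dots> \<le> (\<Sum>n<t. ennreal (?R (Suc n)))"
    by (intro sum_mono ennreal_leI anti) auto
  also have "\<dots> \<le> (\<Sum>n. ennreal (?R (Suc n)))"
    by (intro sum_le_suminf) auto
  finally show ?thesis by (simp add: expected_pulls_def)
qed

lemma pmf_sub: "measure_pmf.prob M (A \<union> B) \<le> measure_pmf.prob M A + measure_pmf.prob M B"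
  by (rule measure_subadditive) (auto simp: measure_pmf.emeasure_eq_measure)

lemma partition_bound:
  "1 \<le> measure_pmf.prob M {x. snd x = None} + measure_pmf.prob M {x. snd x = Some None}
     + measure_pmf.prob M {x. snd x = Some (Some True)} + measure_pmf.prob M {x. snd x = Some (Some False)}"
  (is "1 \<le> ?a + ?b + ?c + ?d")
proof -
  have U: "UNIV = (({x. snd x = None} \<union> {x. snd x = Some None}) \<union> {x. snd x = Some (Some True)}) \<union> {x :: 'a \<times> bool option option. snd x = Some (Some False)}"
    by (auto, metis option.exhaust)
  have "1 = measure_pmf.prob M UNIV" by simp
  also have "\<dots> \<le> measure_pmf.prob M ({x. snd x = None} \<union> {x. snd x = Some None} \<union> {x. snd x = Some (Some True)}) + ?d"
    by (subst U, rule pmf_sub)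
  also have "\<dots> \<le> measure_pmf.prob M ({x. snd x = None} \<union> {x. snd x = Some None}) + ?c + ?d"
    using pmf_sub by (meson add_right_mono)
  also have "\<dots> \<le> ?a + ?b + ?c + ?d"
    using pmf_sub by (meson add_right_mono)
  finally show ?thesis .
qed

lemma le_out_prob: "measure_pmf.prob (run A mu n) {x. snd x = Some out} \<le> out_prob A mu out"
  unfolding out_prob_def
  by (rule cSUP_upper) (auto intro!: bdd_aboveI[where M=1])

lemma out_prob_le1: "out_prob A mu out \<le> 1"
  unfolding out_prob_def by (rule cSUP_least) auto

lemma out_prob_nonneg: "0 \<le> out_prob A mu out"
  using le_out_prob[of A mu 0 out] by (meson measure_nonneg order_trans)

lemma inst_valid: "0 < \<delta> \<Longrightarrow> \<delta> < 1 \<Longrightarrow> valid (inst \<delta> opt)"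
  unfolding valid_def inst_def by auto

lemma gb_calc:
  assumes "0 < (d::real)" "d < 1"
  shows "(1/2 + d/2) * ((1/2 + d/2) / (1/2 - d/2)) + (1 - (1/2 + d/2)) * ((1 - (1/2 + d/2)) / (1 - (1/2 - d/2)))
      = 1 + 4 * d^2 / (1 - d^2)"
    and "(1/2 - d/2) * ((1/2 - d/2) / (1/2 + d/2)) + (1 - (1/2 - d/2)) * ((1 - (1/2 - d/2)) / (1 - (1/2 + d/2)))
      = 1 + 4 * d^2 / (1 - d^2)"
proof -
  have dd: "d * d < d" using assms mult_strict_left_mono[of d 1 d] by simp
  have n: "1 - d \<noteq> 0" "1 + d \<noteq> 0" "1 - d^2 \<noteq> 0" using assms dd by (simp_all add: power2_eq_square, linarith)
  have e1: "(1/2 + d/2) / (1/2 - d/2) = (1+d)/(1-d)" "(1 - (1/2 + d/2)) / (1 - (1/2 - d/2)) = (1-d)/(1+d)"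
    "(1/2 - d/2) / (1/2 + d/2) = (1-d)/(1+d)" "(1 - (1/2 - d/2)) / (1 - (1/2 + d/2)) = (1+d)/(1-d)"
    using assms by (auto simp: field_simps)
  show "(1/2 + d/2) * ((1/2 + d/2) / (1/2 - d/2)) + (1 - (1/2 + d/2)) * ((1 - (1/2 + d/2)) / (1 - (1/2 - d/2)))
      = 1 + 4 * d^2 / (1 - d^2)"
    unfolding e1 using n by (simp add: field_simps power2_eq_square)
  show "(1/2 - d/2) * ((1/2 - d/2) / (1/2 + d/2)) + (1 - (1/2 - d/2)) * ((1 - (1/2 - d/2)) / (1 - (1/2 + d/2)))
      = 1 + 4 * d^2 / (1 - d^2)"
    unfolding e1 using n by (simp add: field_simps power2_eq_square)
qed

lemma inst_gb:
  assumes "0 < \<delta>" "\<delta> < 1"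
  shows "inst \<delta> True a * rt (inst \<delta> True) (inst \<delta> False) a True
     + (1 - inst \<delta> True a) * rt (inst \<delta> True) (inst \<delta> False) a False \<le> 1 + 4 * \<delta>^2 / (1 - \<delta>^2)"
proof -
  have v: "0 \<le> inst \<delta> o' a" "inst \<delta> o' a \<le> 1" for o' using assms by (auto simp: inst_def)
  have r: "rt (inst \<delta> True) (inst \<delta> False) a True = inst \<delta> True a / inst \<delta> False a"
     "rt (inst \<delta> True) (inst \<delta> False) a False = (1 - inst \<delta> True a) / (1 - inst \<delta> False a)"
    using v by (simp_all add: rt_def)
  show ?thesis unfolding r using gb_calc[OF assms] by (cases a) (simp_all add: inst_def)
qed

lemma baif_bounds:
  assumes "solves_BAIF A \<delta> \<alpha>" "0 \<le> \<alpha>" "\<alpha> \<le> 1/2"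
  shows "out_prob A (inst \<delta> opt) None \<le> 1/8"
    and "out_prob A (inst \<delta> opt) (Some (\<not> opt)) \<le> 2 * \<alpha>"
proof -
  have h: "out_prob A (inst \<delta> opt) None \<le> 1/8"
    "out_prob A (inst \<delta> opt) (Some opt) \<ge>
       (1 - \<alpha>) * (out_prob A (inst \<delta> opt) (Some opt) + out_prob A (inst \<delta> opt) (Some (\<not> opt)))"
    using assms(1) unfolding solves_BAIF_def by auto
  show "out_prob A (inst \<delta> opt) None \<le> 1/8" using h(1) .
  have a: "out_prob A (inst \<delta> opt) (Some opt) \<le> 1" "0 \<le> out_prob A (inst \<delta> opt) (Some (\<not> opt))"
    by (rule out_prob_le1, rule out_prob_nonneg)
  have "(1 - \<alpha>) * out_prob A (inst \<delta> opt) (Some (\<not> opt)) \<le> \<alpha> * out_prob A (inst \<delta> opt) (Some opt)"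
    using h(2) by (simp add: algebra_simps)
  also have "\<dots> \<le> \<alpha>" using a(1) assms(2) by (rule mult_left_le)
  finally have 1: "(1 - \<alpha>) * out_prob A (inst \<delta> opt) (Some (\<not> opt)) \<le> \<alpha>" .
  have "(1/2) * out_prob A (inst \<delta> opt) (Some (\<not> opt)) \<le> (1 - \<alpha>) * out_prob A (inst \<delta> opt) (Some (\<not> opt))"
    using a(2) assms(3) by (intro mult_right_mono) auto
  with 1 show "out_prob A (inst \<delta> opt) (Some (\<not> opt)) \<le> 2 * \<alpha>" by linarith
qed

theorem lemma5p1:
  "\<exists>c1 c2 :: real. c1 > 0 \<and> c2 > 0 \<and>
     (\<forall>\<delta> \<alpha> :: real. \<forall>A :: policy.
        0 < \<delta> \<longrightarrow> \<delta> < 1/8 \<longrightarrow> 0 < \<alpha> \<longrightarrow> \<alpha> < exp (-8) / 4 \<longrightarrow>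
        solves_BAIF A \<delta> \<alpha> \<longrightarrow>
        (\<exists>opt. expected_pulls A (inst \<delta> opt) \<ge> ennreal (c1 * (1 / \<delta>^2) * ln (c2 / \<alpha>))))"
proof (rule exI[of _ "1/80"], rule exI[of _ "1/8"], intro conjI allI impI)
  fix \<delta> \<alpha> :: real and A :: policy
  assume d0: "0 < \<delta>" and d1: "\<delta> < 1/8" and a0: "0 < \<alpha>" and a1: "\<alpha> < exp (-8) / 4"
    and S: "solves_BAIF A \<delta> \<alpha>"
  define mu1 where "mu1 = inst \<delta> True"
  define mu0 where "mu0 = inst \<delta> False"
  define g where "g = 1 + 4 * \<delta>^2 / (1 - \<delta>^2)"
  define L where "L = ln ((1/8) / \<alpha>)"
  define B where "B = 1/80 * (1 / \<delta>^2) * L"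
  have v1: "valid mu1" and v0: "valid mu0" using inst_valid d0 d1 by (auto simp: mu1_def mu0_def)
  have dsq: "\<delta>^2 < 1/64" using d0 d1 power_strict_mono[of \<delta> "1/8" 2] by (simp add: power2_eq_square)
  have dsq0: "0 < \<delta>^2" using d0 by simp
  have g1: "1 \<le> g" using dsq dsq0 unfolding g_def by simp
  have gb: "\<And>a. mu1 a * rt mu1 mu0 a True + (1 - mu1 a) * rt mu1 mu0 a False \<le> g"
    unfolding mu1_def mu0_def g_def using inst_gb d0 d1 by simp
  have e8: "exp (-8::real) \<le> 1/9"
  proof -
    have "1 + 8 \<le> exp (8::real)" using exp_ge_add_one_self[of 8] by simp
    then show ?thesis by (simp add: exp_minus field_simps)
  qed
  have a2: "\<alpha> \<le> 1/8" using a1 e8 by simp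
  have L7: "7 \<le> L"
  proof -
    have "exp 8 / 2 < (1/8) / \<alpha>" using a1 a0 by (simp add: exp_minus field_simps)
    hence "ln (exp 8 / 2) < L" unfolding L_def using a0 by (subst ln_less_cancel_iff) auto
    moreover have "ln (exp 8 / 2) = 8 - ln (2::real)" by (simp add: ln_div)
    moreover have "ln (2::real) \<le> 1" using ln_le_minus_one[of 2] by simp
    ultimately show ?thesis by linarith
  qed
  have B0: "0 < B" unfolding B_def using L7 dsq0 by simp
  show "\<exists>opt. ennreal (1/80 * (1 / \<delta>^2) * ln ((1/8) / \<alpha>)) \<le> expected_pulls A (inst \<delta> opt)"
  proof (rule exI[of _ True], rule ccontr)
    assume "\<not> ennreal (1/80 * (1 / \<delta>^2) * ln ((1/8) / \<alpha>)) \<le> expected_pulls A (inst \<delta> True)"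
    hence E: "expected_pulls A mu1 < ennreal B" unfolding B_def L_def mu1_def by simp
    define t where "t = nat \<lceil>8 * B\<rceil>"
    have t1: "8 * B \<le> real t" unfolding t_def by linarith
    have t2: "real t < 8 * B + 1" unfolding t_def using B0 by linarith
    have tpos: "0 < real t" using t1 B0 by linarith
    let ?R = "measure_pmf.prob (run A mu1 t) {x. snd x = None}"
    have "real t * ?R < B"
    proof (rule ccontr)
      assume "\<not> real t * ?R < B"
      hence "ennreal B \<le> ennreal (real t * ?R)" by (intro ennreal_leI) simp
      also have "\<dots> \<le> expected_pulls A mu1" by (rule pulls_bound)
      finally show False using E by simp
    qed
    hence "?R < B / real t" using tpos by (simp add: field_simps)
    also have "\<dots> \<le> 1/8" using t1 tpos B0 by (simp add: field_simps)
    finally have R: "?R < 1/8" .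
    have P1N: "measure_pmf.prob (run A mu1 t) {x. snd x = Some None} \<le> 1/8"
      using le_out_prob[of A mu1 t None] baif_bounds(1)[OF S _ _, of True] a0 a2
      unfolding mu1_def by simp
    have P1F: "measure_pmf.prob (run A mu1 t) {x. snd x = Some (Some False)} \<le> 2 * \<alpha>"
      using le_out_prob[of A mu1 t "Some False"] baif_bounds(2)[OF S _ _, of True] a0 a2
      unfolding mu1_def by simp
    have P0T: "measure_pmf.prob (run A mu0 t) {x. snd x = Some (Some True)} \<le> 2 * \<alpha>"
      using le_out_prob[of A mu0 t "Some True"] baif_bounds(2)[OF S _ _, of False] a0 a2
      unfolding mu0_def by simp
    have P1T: "1/2 \<le> measure_pmf.prob (run A mu1 t) {x. snd x = Some (Some True)}"
      using partition_bound[of "run A mu1 t"] R P1N P1F a2 by linarith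
    have lp: "0 < 1 / (8 * \<alpha>)" using a0 by simp
    have "measure_pmf.prob (run A mu1 t) {x. snd x = Some (Some True)}
        \<le> 1 / (8 * \<alpha>) * measure_pmf.prob (run A mu0 t) {x. snd x = Some (Some True)} + g ^ t / (4 * (1 / (8 * \<alpha>)))"
      by (rule change_measure[OF v1 v0 g1 gb lp])
    also have "\<dots> \<le> 1 / (8 * \<alpha>) * (2 * \<alpha>) + g ^ t / (4 * (1 / (8 * \<alpha>)))"
      using P0T lp by (intro add_right_mono mult_left_mono) auto
    also have "\<dots> = 1/4 + 2 * \<alpha> * g ^ t" using a0 by (simp add: field_simps)
    finally have "1/4 \<le> 2 * \<alpha> * g ^ t" using P1T by linarith
    hence gt: "(1/8) / \<alpha> \<le> g ^ t" using a0 by (simp add: field_simps)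
    have g0: "0 < g" using g1 by simp
    have "L \<le> ln (g ^ t)" unfolding L_def using gt a0 g0 by (subst ln_le_cancel_iff) auto
    also have "\<dots> = real t * ln g" by (rule ln_realpow)
    also have "\<dots> \<le> real t * (g - 1)" using tpos ln_le_minus_one[OF g0] by (intro mult_left_mono) auto
    also have "\<dots> \<le> real t * (5 * \<delta>^2)"
    proof (intro mult_left_mono)
      have "5 * \<delta>^2 * \<delta>^2 \<le> 1 * \<delta>^2" using dsq dsq0 by (intro mult_right_mono) auto
      hence "4 * \<delta>^2 \<le> 5 * \<delta>^2 * (1 - \<delta>^2)" by (simp add: algebra_simps)
      then show "g - 1 \<le> 5 * \<delta>^2" unfolding g_def using dsq by (simp add: field_simps)
    qed (use tpos in auto)
    also have "\<dots> \<le> (8 * B + 1) * (5 * \<delta>^2)" using t2 dsq0 by (intro mult_right_mono) auto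
    also have "\<dots> = L / 2 + 5 * \<delta>^2" unfolding B_def using dsq0 by (simp add: field_simps)
    finally have "L \<le> L / 2 + 5 * \<delta>^2" .
    then show False using L7 dsq by linarith
  qed
qed simp_all

end
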